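(* Let $H$ be obtained from $E_{20}$ by adding a new vertex $v$ and joining it to three distinct vertices of $E_{20}$; let $S$ be the set of these three neighbours. If either every two vertices of $S$ are adjacent in $E_{20}$, or no two vertices of $S$ are adjacent in $E_{20}$, then $H$ contains $K_{3,4}$ or $F_4$ as a minor.
   Context: $E_{20}$ is the graph with vertex set $\{e^0,e^1_1,e^1_2,e^1_3,e^2,e^3_1,e^3_2,e^3_3,e^4\}$ and the 16 edges $e^0e^2$; $e^0e^1_i$ ($i=1,2,3$); $e^1_1e^1_2$, $e^1_2e^1_3$, $e^1_3e^1_1$; and, for $i=1,2,3$, $e^1_ie^3_i$, $e^2e^3_i$, $e^4e^3_i$. $F_4$ is the graph with vertex set $\{f^1,f^2\}\cup\{f^i_j: i\in\{1,2\}, j\in\{1,2,3,4\}\}$ and the 16 edges: for each $i\in\{1,2\}$, $f^if^i_1$, $f^if^i_2$, $f^if^i_4$, $f^i_3f^i_1$, $f^i_3f^i_2$, $f^i_3f^i_4$; and $f^1_jf^2_{5-j}$ for $j=1,2,3,4$. *)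

theory Defs
  imports Main
begin

text \<open>Finite simple graphs are given by a vertex set V and a set E of edges,
each edge being a two-element set of vertices.\<close>

definition induced_connected :: "'a set set \<Rightarrow> 'a set \<Rightarrow> bool" where
  "induced_connected E X \<longleftrightarrow> X \<noteq> {} \<and>
     (\<forall>x\<in>X. \<forall>y\<in>X. (x, y) \<in> {(a, b). a \<in> X \<and> b \<in> X \<and> {a, b} \<in> E}\<^sup>*)"

definition is_minor :: "'b set \<Rightarrow> 'b set set \<Rightarrow> 'a set \<Rightarrow> 'a set set \<Rightarrow> bool" where
  "is_minor VG EG VH EH \<longleftrightarrow> (\<exists>\<phi> :: 'b \<Rightarrow> 'a set.
     (\<forall>u\<in>VG. \<phi> u \<subseteq> VH \<and> induced_connected EH (\<phi> u)) \<and>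
     (\<forall>u\<in>VG. \<forall>w\<in>VG. u \<noteq> w \<longrightarrow> \<phi> u \<inter> \<phi> w = {}) \<and>
     (\<forall>u w. {u, w} \<in> EG \<longrightarrow> u \<noteq> w \<longrightarrow> (\<exists>x\<in>\<phi> u. \<exists>y\<in>\<phi> w. {x, y} \<in> EH)))"

text \<open>The graph E20. E1 i stands for e^1_i, E3 i for e^3_i.\<close>
datatype e20v = E0 | E1 nat | E2 | E3 nat | E4

definition E20_V :: "e20v set" where
  "E20_V = {E0, E2, E4} \<union> E1 ` {1,2,3} \<union> E3 ` {1,2,3}"

definition E20_E :: "e20v set set" where
  "E20_E = {{E0, E2}} \<union> (\<lambda>i. {E0, E1 i}) ` {1,2,3}
     \<union> {{E1 1, E1 2}, {E1 2, E1 3}, {E1 3, E1 1}}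
     \<union> (\<lambda>i. {E1 i, E3 i}) ` {1,2,3} \<union> (\<lambda>i. {E2, E3 i}) ` {1,2,3}
     \<union> (\<lambda>i. {E4, E3 i}) ` {1,2,3}"

text \<open>The graph F4. Fc i stands for f^i, Fs i j for f^i_j.\<close>
datatype f4v = Fc nat | Fs nat nat

definition F4_V :: "f4v set" where
  "F4_V = Fc ` {1,2} \<union> {Fs i j | i j. i \<in> {1,2} \<and> j \<in> {1,2,3,4}}"

definition F4_E :: "f4v set set" where
  "F4_E = (\<Union>i\<in>{1,2::nat}. {{Fc i, Fs i 1}, {Fc i, Fs i 2}, {Fc i, Fs i 4},
                          {Fs i 3, Fs i 1}, {Fs i 3, Fs i 2}, {Fs i 3, Fs i 4}})
     \<union> (\<lambda>j. {Fs 1 j, Fs 2 (5 - j)}) ` {1,2,3,4}"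

definition K34_V :: "(nat + nat) set" where
  "K34_V = Inl ` {0..<3} \<union> Inr ` {0..<4}"

definition K34_E :: "(nat + nat) set set" where
  "K34_E = {{Inl i, Inr j} | i j. i < 3 \<and> j < 4}"

text \<open>H: E20 plus a new vertex (None) joined to the vertices of S.
Original vertices x are embedded as Some x.\<close>
definition H_V :: "e20v option set" where
  "H_V = insert None (Some ` E20_V)"

definition H_E :: "e20v set \<Rightarrow> e20v option set set" where
  "H_E S = (\<lambda>e. Some ` e) ` E20_E \<union> (\<lambda>s. {None, Some s}) ` S"

end

theory Submission
  imports Defs
begin

lemma ic1: "induced_connected E {x}"
  by (simp add: induced_connected_def)

lemma ic2: assumes "{x,y} \<in> E" shows "induced_connected E {x,y}"
proof -
  let ?R = "{(a, b). a \<in> {x,y} \<and> b \<in> {x,y} \<and> {a, b} \<in> E}"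
  have "(x,y) \<in> ?R" "(y,x) \<in> ?R" using assms by (auto simp: insert_commute)
  then show ?thesis unfolding induced_connected_def by blast
qed

lemma ic3: assumes "{x,y} \<in> E" "{y,z} \<in> E" shows "induced_connected E {x,y,z}"
proof -
  let ?R = "{(a, b). a \<in> {x,y,z} \<and> b \<in> {x,y,z} \<and> {a, b} \<in> E}"
  have 1: "(x,y) \<in> ?R" "(y,x) \<in> ?R" "(y,z) \<in> ?R" "(z,y) \<in> ?R" using assms by (auto simp: insert_commute)
  have "(x,z) \<in> ?R\<^sup>*" "(z,x) \<in> ?R\<^sup>*" using 1 by (meson converse_rtrancl_into_rtrancl r_into_rtrancl)+
  then show ?thesis using 1 unfolding induced_connected_def by blast
qed

lemma all3: "(\<forall>i<(3::nat). P i) = (P 0 \<and> P 1 \<and> P 2)"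
  by (auto simp: less_Suc_eq numeral_eq_Suc)
lemma all4: "(\<forall>i<(4::nat). P i) = (P 0 \<and> P 1 \<and> P 2 \<and> P 3)"
  by (auto simp: less_Suc_eq numeral_eq_Suc)

lemma K34_V_alt: "K34_V = {Inl 0, Inl 1, Inl 2, Inr 0, Inr 1, Inr 2, Inr 3}"
  by (auto simp: K34_V_def less_Suc_eq numeral_eq_Suc)

lemma K34I:
  assumes "\<forall>u\<in>K34_V. \<phi> u \<subseteq> VH \<and> induced_connected EH (\<phi> u)"
    "\<forall>u\<in>K34_V. \<forall>w\<in>K34_V. u \<noteq> w \<longrightarrow> \<phi> u \<inter> \<phi> w = {}"
    "\<forall>i<3. \<forall>j<4. \<exists>x\<in>\<phi> (Inl i). \<exists>y\<in>\<phi> (Inr j). {x,y} \<in> EH"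
  shows "is_minor K34_V K34_E VH EH"
  unfolding is_minor_def
proof (intro exI conjI)
  show "\<forall>u w. {u, w} \<in> K34_E \<longrightarrow> u \<noteq> w \<longrightarrow> (\<exists>x\<in>\<phi> u. \<exists>y\<in>\<phi> w. {x, y} \<in> EH)"
  proof (intro allI impI)
    fix u w assume "{u,w} \<in> K34_E" "u \<noteq> w"
    then obtain i j where ij: "i<3" "j<4" "{u,w} = {Inl i, Inr j}" by (auto simp: K34_E_def)
    then have "(u = Inl i \<and> w = Inr j) \<or> (u = Inr j \<and> w = Inl i)" by (auto simp: doubleton_eq_iff)
    then show "\<exists>x\<in>\<phi> u. \<exists>y\<in>\<phi> w. {x, y} \<in> EH" using assms(3) ij by (metis insert_commute)
  qed
qed (use assms in auto)

lemma F4_V_alt: "F4_V = {Fc 1, Fc 2, Fs 1 1, Fs 1 2, Fs 1 3, Fs 1 4, Fs 2 1, Fs 2 2, Fs 2 3, Fs 2 4}"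
  by (auto simp: F4_V_def)

lemma F4_E_alt: "F4_E = {{Fc 1, Fs 1 1}, {Fc 1, Fs 1 2}, {Fc 1, Fs 1 4},
                          {Fs 1 3, Fs 1 1}, {Fs 1 3, Fs 1 2}, {Fs 1 3, Fs 1 4},
  {Fc 2, Fs 2 1}, {Fc 2, Fs 2 2}, {Fc 2, Fs 2 4},
                          {Fs 2 3, Fs 2 1}, {Fs 2 3, Fs 2 2}, {Fs 2 3, Fs 2 4},
  {Fs 1 1, Fs 2 4}, {Fs 1 2, Fs 2 3}, {Fs 1 3, Fs 2 2}, {Fs 1 4, Fs 2 1}}"
  by (auto simp: F4_E_def)

lemma F4I:
  assumes "\<forall>u\<in>F4_V. f u \<in> VH" "inj_on f F4_V"
    "\<forall>u w. {u,w} \<in> F4_E \<longrightarrow> {f u, f w} \<in> EH"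
  shows "is_minor F4_V F4_E VH EH"
  unfolding is_minor_def
proof (intro exI[of _ "\<lambda>u. {f u}"] conjI)
  show "\<forall>u\<in>F4_V. \<forall>w\<in>F4_V. u \<noteq> w \<longrightarrow> {f u} \<inter> {f w} = {}"
    using assms(2) by (auto simp: inj_on_def)
qed (use assms ic1 in auto)

lemma E20_E_alt: "E20_E = {{E0, E2}, {E0, E1 1}, {E0, E1 2}, {E0, E1 3},
  {E1 1, E1 2}, {E1 2, E1 3}, {E1 3, E1 1},
  {E1 1, E3 1}, {E1 2, E3 2}, {E1 3, E3 3},
  {E2, E3 1}, {E2, E3 2}, {E2, E3 3}, {E4, E3 1}, {E4, E3 2}, {E4, E3 3}}"
  by (auto simp: E20_E_def)

lemma E20_V_alt: "E20_V = {E0, E1 1, E1 2, E1 3, E2, E3 1, E3 2, E3 3, E4}"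
  by (auto simp: E20_V_def)

lemma H_V_alt: "H_V = {None, Some E0, Some (E1 1), Some (E1 2), Some (E1 3), Some E2, Some (E3 1), Some (E3 2), Some (E3 3), Some E4}"
  by (auto simp: H_V_def E20_V_alt)

lemma H_E_alt: "H_E S = {{Some E0, Some E2}, {Some E0, Some (E1 1)}, {Some E0, Some (E1 2)}, {Some E0, Some (E1 3)},
  {Some (E1 1), Some (E1 2)}, {Some (E1 2), Some (E1 3)}, {Some (E1 3), Some (E1 1)},
  {Some (E1 1), Some (E3 1)}, {Some (E1 2), Some (E3 2)}, {Some (E1 3), Some (E3 3)},
  {Some E2, Some (E3 1)}, {Some E2, Some (E3 2)}, {Some E2, Some (E3 3)},
  {Some E4, Some (E3 1)}, {Some E4, Some (E3 2)}, {Some E4, Some (E3 3)}} \<union> (\<lambda>s. {None, Some s}) ` S"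
  by (simp add: H_E_def E20_E_alt)

lemma case0: "is_minor F4_V F4_E H_V (H_E {E0, (E1 1), (E1 2)})"
  apply (rule F4I[where f = "\<lambda>u. case u of Fc i \<Rightarrow> (if i = 1 then Some E4 else None) | Fs i j \<Rightarrow> (if i = 1 then (if j = 1 then Some (E3 1) else if j = 2 then Some (E3 3) else if j = 3 then Some E2 else Some (E3 2)) else (if j = 1 then Some (E1 2) else if j = 2 then Some E0 else if j = 3 then Some (E1 3) else Some (E1 1)))"])
  apply (simp add: F4_V_alt H_V_alt)
  apply (simp add: F4_V_alt)
  apply (simp only: F4_E_alt)
  apply (auto simp: H_E_alt doubleton_eq_iff)
  done

lemma perm0_0: "(is_minor K34_V K34_E H_V (H_E {E0, (E1 1), (E1 2)}) \<or> is_minor F4_V F4_E H_V (H_E {E0, (E1 1), (E1 2)}))"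
  using case0 by (simp add: insert_commute)

lemma perm0_1: "(is_minor K34_V K34_E H_V (H_E {E0, (E1 2), (E1 1)}) \<or> is_minor F4_V F4_E H_V (H_E {E0, (E1 2), (E1 1)}))"
  using case0 by (simp add: insert_commute)

lemma perm0_2: "(is_minor K34_V K34_E H_V (H_E {(E1 1), E0, (E1 2)}) \<or> is_minor F4_V F4_E H_V (H_E {(E1 1), E0, (E1 2)}))"
  using case0 by (simp add: insert_commute)

lemma perm0_3: "(is_minor K34_V K34_E H_V (H_E {(E1 1), (E1 2), E0}) \<or> is_minor F4_V F4_E H_V (H_E {(E1 1), (E1 2), E0}))"
  using case0 by (simp add: insert_commute)

lemma perm0_4: "(is_minor K34_V K34_E H_V (H_E {(E1 2), E0, (E1 1)}) \<or> is_minor F4_V F4_E H_V (H_E {(E1 2), E0, (E1 1)}))"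
  using case0 by (simp add: insert_commute)

lemma perm0_5: "(is_minor K34_V K34_E H_V (H_E {(E1 2), (E1 1), E0}) \<or> is_minor F4_V F4_E H_V (H_E {(E1 2), (E1 1), E0}))"
  using case0 by (simp add: insert_commute)

lemma case1: "is_minor F4_V F4_E H_V (H_E {E0, (E1 1), (E1 3)})"
  apply (rule F4I[where f = "\<lambda>u. case u of Fc i \<Rightarrow> (if i = 1 then Some E4 else None) | Fs i j \<Rightarrow> (if i = 1 then (if j = 1 then Some (E3 1) else if j = 2 then Some (E3 2) else if j = 3 then Some E2 else Some (E3 3)) else (if j = 1 then Some (E1 3) else if j = 2 then Some E0 else if j = 3 then Some (E1 2) else Some (E1 1)))"])
  apply (simp add: F4_V_alt H_V_alt)
  apply (simp add: F4_V_alt)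
  apply (simp only: F4_E_alt)
  apply (auto simp: H_E_alt doubleton_eq_iff)
  done

lemma perm1_6: "(is_minor K34_V K34_E H_V (H_E {E0, (E1 1), (E1 3)}) \<or> is_minor F4_V F4_E H_V (H_E {E0, (E1 1), (E1 3)}))"
  using case1 by (simp add: insert_commute)

lemma perm1_7: "(is_minor K34_V K34_E H_V (H_E {E0, (E1 3), (E1 1)}) \<or> is_minor F4_V F4_E H_V (H_E {E0, (E1 3), (E1 1)}))"
  using case1 by (simp add: insert_commute)

lemma perm1_8: "(is_minor K34_V K34_E H_V (H_E {(E1 1), E0, (E1 3)}) \<or> is_minor F4_V F4_E H_V (H_E {(E1 1), E0, (E1 3)}))"
  using case1 by (simp add: insert_commute)

lemma perm1_9: "(is_minor K34_V K34_E H_V (H_E {(E1 1), (E1 3), E0}) \<or> is_minor F4_V F4_E H_V (H_E {(E1 1), (E1 3), E0}))"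
  using case1 by (simp add: insert_commute)

lemma perm1_10: "(is_minor K34_V K34_E H_V (H_E {(E1 3), E0, (E1 1)}) \<or> is_minor F4_V F4_E H_V (H_E {(E1 3), E0, (E1 1)}))"
  using case1 by (simp add: insert_commute)

lemma perm1_11: "(is_minor K34_V K34_E H_V (H_E {(E1 3), (E1 1), E0}) \<or> is_minor F4_V F4_E H_V (H_E {(E1 3), (E1 1), E0}))"
  using case1 by (simp add: insert_commute)

lemma case2: "is_minor F4_V F4_E H_V (H_E {E0, (E1 2), (E1 3)})"
  apply (rule F4I[where f = "\<lambda>u. case u of Fc i \<Rightarrow> (if i = 1 then Some E4 else None) | Fs i j \<Rightarrow> (if i = 1 then (if j = 1 then Some (E3 2) else if j = 2 then Some (E3 1) else if j = 3 then Some E2 else Some (E3 3)) else (if j = 1 then Some (E1 3) else if j = 2 then Some E0 else if j = 3 then Some (E1 1) else Some (E1 2)))"])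
  apply (simp add: F4_V_alt H_V_alt)
  apply (simp add: F4_V_alt)
  apply (simp only: F4_E_alt)
  apply (auto simp: H_E_alt doubleton_eq_iff)
  done

lemma perm2_12: "(is_minor K34_V K34_E H_V (H_E {E0, (E1 2), (E1 3)}) \<or> is_minor F4_V F4_E H_V (H_E {E0, (E1 2), (E1 3)}))"
  using case2 by (simp add: insert_commute)

lemma perm2_13: "(is_minor K34_V K34_E H_V (H_E {E0, (E1 3), (E1 2)}) \<or> is_minor F4_V F4_E H_V (H_E {E0, (E1 3), (E1 2)}))"
  using case2 by (simp add: insert_commute)

lemma perm2_14: "(is_minor K34_V K34_E H_V (H_E {(E1 2), E0, (E1 3)}) \<or> is_minor F4_V F4_E H_V (H_E {(E1 2), E0, (E1 3)}))"
  using case2 by (simp add: insert_commute)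

lemma perm2_15: "(is_minor K34_V K34_E H_V (H_E {(E1 2), (E1 3), E0}) \<or> is_minor F4_V F4_E H_V (H_E {(E1 2), (E1 3), E0}))"
  using case2 by (simp add: insert_commute)

lemma perm2_16: "(is_minor K34_V K34_E H_V (H_E {(E1 3), E0, (E1 2)}) \<or> is_minor F4_V F4_E H_V (H_E {(E1 3), E0, (E1 2)}))"
  using case2 by (simp add: insert_commute)

lemma perm2_17: "(is_minor K34_V K34_E H_V (H_E {(E1 3), (E1 2), E0}) \<or> is_minor F4_V F4_E H_V (H_E {(E1 3), (E1 2), E0}))"
  using case2 by (simp add: insert_commute)

lemma case3: "is_minor K34_V K34_E H_V (H_E {E0, (E3 1), (E3 2)})"
  apply (rule K34I[where \<phi> = "\<lambda>u. case u of Inl i \<Rightarrow> (if i = 0 then {Some E0} else if i = 1 then {Some (E1 1), Some (E3 1)} else {Some (E3 2), Some E4, Some (E3 3)}) | Inr j \<Rightarrow> (if j = 0 then {Some (E1 2)} else if j = 1 then {Some (E1 3)} else if j = 2 then {Some E2} else {None})"])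
  apply (simp_all only: K34_V_alt all3 all4)
  apply (simp_all add: H_V_alt)
  apply (intro conjI ic1 ic2 ic3; simp add: H_E_alt doubleton_eq_iff)
  apply (simp add: H_E_alt doubleton_eq_iff)
  done

lemma perm3_18: "(is_minor K34_V K34_E H_V (H_E {E0, (E3 1), (E3 2)}) \<or> is_minor F4_V F4_E H_V (H_E {E0, (E3 1), (E3 2)}))"
  using case3 by (simp add: insert_commute)

lemma perm3_19: "(is_minor K34_V K34_E H_V (H_E {E0, (E3 2), (E3 1)}) \<or> is_minor F4_V F4_E H_V (H_E {E0, (E3 2), (E3 1)}))"
  using case3 by (simp add: insert_commute)

lemma perm3_20: "(is_minor K34_V K34_E H_V (H_E {(E3 1), E0, (E3 2)}) \<or> is_minor F4_V F4_E H_V (H_E {(E3 1), E0, (E3 2)}))"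
  using case3 by (simp add: insert_commute)

lemma perm3_21: "(is_minor K34_V K34_E H_V (H_E {(E3 1), (E3 2), E0}) \<or> is_minor F4_V F4_E H_V (H_E {(E3 1), (E3 2), E0}))"
  using case3 by (simp add: insert_commute)

lemma perm3_22: "(is_minor K34_V K34_E H_V (H_E {(E3 2), E0, (E3 1)}) \<or> is_minor F4_V F4_E H_V (H_E {(E3 2), E0, (E3 1)}))"
  using case3 by (simp add: insert_commute)

lemma perm3_23: "(is_minor K34_V K34_E H_V (H_E {(E3 2), (E3 1), E0}) \<or> is_minor F4_V F4_E H_V (H_E {(E3 2), (E3 1), E0}))"
  using case3 by (simp add: insert_commute)

lemma case4: "is_minor K34_V K34_E H_V (H_E {E0, (E3 1), (E3 3)})"
  apply (rule K34I[where \<phi> = "\<lambda>u. case u of Inl i \<Rightarrow> (if i = 0 then {Some E0} else if i = 1 then {Some (E1 1), Some (E3 1)} else {Some (E3 2), Some E4, Some (E3 3)}) | Inr j \<Rightarrow> (if j = 0 then {Some (E1 2)} else if j = 1 then {Some (E1 3)} else if j = 2 then {Some E2} else {None})"])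
  apply (simp_all only: K34_V_alt all3 all4)
  apply (simp_all add: H_V_alt)
  apply (intro conjI ic1 ic2 ic3; simp add: H_E_alt doubleton_eq_iff)
  apply (simp add: H_E_alt doubleton_eq_iff)
  done

lemma perm4_24: "(is_minor K34_V K34_E H_V (H_E {E0, (E3 1), (E3 3)}) \<or> is_minor F4_V F4_E H_V (H_E {E0, (E3 1), (E3 3)}))"
  using case4 by (simp add: insert_commute)

lemma perm4_25: "(is_minor K34_V K34_E H_V (H_E {E0, (E3 3), (E3 1)}) \<or> is_minor F4_V F4_E H_V (H_E {E0, (E3 3), (E3 1)}))"
  using case4 by (simp add: insert_commute)

lemma perm4_26: "(is_minor K34_V K34_E H_V (H_E {(E3 1), E0, (E3 3)}) \<or> is_minor F4_V F4_E H_V (H_E {(E3 1), E0, (E3 3)}))"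
  using case4 by (simp add: insert_commute)

lemma perm4_27: "(is_minor K34_V K34_E H_V (H_E {(E3 1), (E3 3), E0}) \<or> is_minor F4_V F4_E H_V (H_E {(E3 1), (E3 3), E0}))"
  using case4 by (simp add: insert_commute)

lemma perm4_28: "(is_minor K34_V K34_E H_V (H_E {(E3 3), E0, (E3 1)}) \<or> is_minor F4_V F4_E H_V (H_E {(E3 3), E0, (E3 1)}))"
  using case4 by (simp add: insert_commute)

lemma perm4_29: "(is_minor K34_V K34_E H_V (H_E {(E3 3), (E3 1), E0}) \<or> is_minor F4_V F4_E H_V (H_E {(E3 3), (E3 1), E0}))"
  using case4 by (simp add: insert_commute)

lemma case5: "is_minor K34_V K34_E H_V (H_E {E0, (E3 2), (E3 3)})"
  apply (rule K34I[where \<phi> = "\<lambda>u. case u of Inl i \<Rightarrow> (if i = 0 then {Some E0} else if i = 1 then {Some (E1 2), Some (E3 2)} else {Some (E3 1), Some E4, Some (E3 3)}) | Inr j \<Rightarrow> (if j = 0 then {Some (E1 1)} else if j = 1 then {Some (E1 3)} else if j = 2 then {Some E2} else {None})"])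
  apply (simp_all only: K34_V_alt all3 all4)
  apply (simp_all add: H_V_alt)
  apply (intro conjI ic1 ic2 ic3; simp add: H_E_alt doubleton_eq_iff)
  apply (simp add: H_E_alt doubleton_eq_iff)
  done

lemma perm5_30: "(is_minor K34_V K34_E H_V (H_E {E0, (E3 2), (E3 3)}) \<or> is_minor F4_V F4_E H_V (H_E {E0, (E3 2), (E3 3)}))"
  using case5 by (simp add: insert_commute)

lemma perm5_31: "(is_minor K34_V K34_E H_V (H_E {E0, (E3 3), (E3 2)}) \<or> is_minor F4_V F4_E H_V (H_E {E0, (E3 3), (E3 2)}))"
  using case5 by (simp add: insert_commute)

lemma perm5_32: "(is_minor K34_V K34_E H_V (H_E {(E3 2), E0, (E3 3)}) \<or> is_minor F4_V F4_E H_V (H_E {(E3 2), E0, (E3 3)}))"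
  using case5 by (simp add: insert_commute)

lemma perm5_33: "(is_minor K34_V K34_E H_V (H_E {(E3 2), (E3 3), E0}) \<or> is_minor F4_V F4_E H_V (H_E {(E3 2), (E3 3), E0}))"
  using case5 by (simp add: insert_commute)

lemma perm5_34: "(is_minor K34_V K34_E H_V (H_E {(E3 3), E0, (E3 2)}) \<or> is_minor F4_V F4_E H_V (H_E {(E3 3), E0, (E3 2)}))"
  using case5 by (simp add: insert_commute)

lemma perm5_35: "(is_minor K34_V K34_E H_V (H_E {(E3 3), (E3 2), E0}) \<or> is_minor F4_V F4_E H_V (H_E {(E3 3), (E3 2), E0}))"
  using case5 by (simp add: insert_commute)

lemma case6: "is_minor K34_V K34_E H_V (H_E {(E1 1), (E1 2), (E1 3)})"
  apply (rule K34I[where \<phi> = "\<lambda>u. case u of Inl i \<Rightarrow> (if i = 0 then {Some (E1 1), Some (E3 1)} else if i = 1 then {Some (E1 2), Some (E3 2)} else {Some (E1 3), Some (E3 3)}) | Inr j \<Rightarrow> (if j = 0 then {Some E0} else if j = 1 then {Some E2} else if j = 2 then {Some E4} else {None})"])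
  apply (simp_all only: K34_V_alt all3 all4)
  apply (simp_all add: H_V_alt)
  apply (intro conjI ic1 ic2 ic3; simp add: H_E_alt doubleton_eq_iff)
  apply (simp add: H_E_alt doubleton_eq_iff)
  done

lemma perm6_36: "(is_minor K34_V K34_E H_V (H_E {(E1 1), (E1 2), (E1 3)}) \<or> is_minor F4_V F4_E H_V (H_E {(E1 1), (E1 2), (E1 3)}))"
  using case6 by (simp add: insert_commute)

lemma perm6_37: "(is_minor K34_V K34_E H_V (H_E {(E1 1), (E1 3), (E1 2)}) \<or> is_minor F4_V F4_E H_V (H_E {(E1 1), (E1 3), (E1 2)}))"
  using case6 by (simp add: insert_commute)

lemma perm6_38: "(is_minor K34_V K34_E H_V (H_E {(E1 2), (E1 1), (E1 3)}) \<or> is_minor F4_V F4_E H_V (H_E {(E1 2), (E1 1), (E1 3)}))"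
  using case6 by (simp add: insert_commute)

lemma perm6_39: "(is_minor K34_V K34_E H_V (H_E {(E1 2), (E1 3), (E1 1)}) \<or> is_minor F4_V F4_E H_V (H_E {(E1 2), (E1 3), (E1 1)}))"
  using case6 by (simp add: insert_commute)

lemma perm6_40: "(is_minor K34_V K34_E H_V (H_E {(E1 3), (E1 1), (E1 2)}) \<or> is_minor F4_V F4_E H_V (H_E {(E1 3), (E1 1), (E1 2)}))"
  using case6 by (simp add: insert_commute)

lemma perm6_41: "(is_minor K34_V K34_E H_V (H_E {(E1 3), (E1 2), (E1 1)}) \<or> is_minor F4_V F4_E H_V (H_E {(E1 3), (E1 2), (E1 1)}))"
  using case6 by (simp add: insert_commute)

lemma case7: "is_minor K34_V K34_E H_V (H_E {(E1 1), E2, E4})"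
  apply (rule K34I[where \<phi> = "\<lambda>u. case u of Inl i \<Rightarrow> (if i = 0 then {Some (E1 1)} else if i = 1 then {Some E2} else {Some E4}) | Inr j \<Rightarrow> (if j = 0 then {Some (E3 1)} else if j = 1 then {Some (E1 2), Some (E3 2)} else if j = 2 then {Some (E1 3), Some (E3 3)} else {None})"])
  apply (simp_all only: K34_V_alt all3 all4)
  apply (simp_all add: H_V_alt)
  apply (intro conjI ic1 ic2 ic3; simp add: H_E_alt doubleton_eq_iff)
  apply (simp add: H_E_alt doubleton_eq_iff)
  done

lemma perm7_42: "(is_minor K34_V K34_E H_V (H_E {(E1 1), E2, E4}) \<or> is_minor F4_V F4_E H_V (H_E {(E1 1), E2, E4}))"
  using case7 by (simp add: insert_commute)

lemma perm7_43: "(is_minor K34_V K34_E H_V (H_E {(E1 1), E4, E2}) \<or> is_minor F4_V F4_E H_V (H_E {(E1 1), E4, E2}))"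
  using case7 by (simp add: insert_commute)

lemma perm7_44: "(is_minor K34_V K34_E H_V (H_E {E2, (E1 1), E4}) \<or> is_minor F4_V F4_E H_V (H_E {E2, (E1 1), E4}))"
  using case7 by (simp add: insert_commute)

lemma perm7_45: "(is_minor K34_V K34_E H_V (H_E {E2, E4, (E1 1)}) \<or> is_minor F4_V F4_E H_V (H_E {E2, E4, (E1 1)}))"
  using case7 by (simp add: insert_commute)

lemma perm7_46: "(is_minor K34_V K34_E H_V (H_E {E4, (E1 1), E2}) \<or> is_minor F4_V F4_E H_V (H_E {E4, (E1 1), E2}))"
  using case7 by (simp add: insert_commute)

lemma perm7_47: "(is_minor K34_V K34_E H_V (H_E {E4, E2, (E1 1)}) \<or> is_minor F4_V F4_E H_V (H_E {E4, E2, (E1 1)}))"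
  using case7 by (simp add: insert_commute)

lemma case8: "is_minor K34_V K34_E H_V (H_E {(E1 1), (E3 2), (E3 3)})"
  apply (rule K34I[where \<phi> = "\<lambda>u. case u of Inl i \<Rightarrow> (if i = 0 then {Some (E1 1), Some (E3 1)} else if i = 1 then {Some (E3 2)} else {Some (E1 3), Some (E3 3)}) | Inr j \<Rightarrow> (if j = 0 then {Some (E1 2)} else if j = 1 then {Some E2} else if j = 2 then {Some E4} else {None})"])
  apply (simp_all only: K34_V_alt all3 all4)
  apply (simp_all add: H_V_alt)
  apply (intro conjI ic1 ic2 ic3; simp add: H_E_alt doubleton_eq_iff)
  apply (simp add: H_E_alt doubleton_eq_iff)
  done

lemma perm8_48: "(is_minor K34_V K34_E H_V (H_E {(E1 1), (E3 2), (E3 3)}) \<or> is_minor F4_V F4_E H_V (H_E {(E1 1), (E3 2), (E3 3)}))"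
  using case8 by (simp add: insert_commute)

lemma perm8_49: "(is_minor K34_V K34_E H_V (H_E {(E1 1), (E3 3), (E3 2)}) \<or> is_minor F4_V F4_E H_V (H_E {(E1 1), (E3 3), (E3 2)}))"
  using case8 by (simp add: insert_commute)

lemma perm8_50: "(is_minor K34_V K34_E H_V (H_E {(E3 2), (E1 1), (E3 3)}) \<or> is_minor F4_V F4_E H_V (H_E {(E3 2), (E1 1), (E3 3)}))"
  using case8 by (simp add: insert_commute)

lemma perm8_51: "(is_minor K34_V K34_E H_V (H_E {(E3 2), (E3 3), (E1 1)}) \<or> is_minor F4_V F4_E H_V (H_E {(E3 2), (E3 3), (E1 1)}))"
  using case8 by (simp add: insert_commute)

lemma perm8_52: "(is_minor K34_V K34_E H_V (H_E {(E3 3), (E1 1), (E3 2)}) \<or> is_minor F4_V F4_E H_V (H_E {(E3 3), (E1 1), (E3 2)}))"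
  using case8 by (simp add: insert_commute)

lemma perm8_53: "(is_minor K34_V K34_E H_V (H_E {(E3 3), (E3 2), (E1 1)}) \<or> is_minor F4_V F4_E H_V (H_E {(E3 3), (E3 2), (E1 1)}))"
  using case8 by (simp add: insert_commute)

lemma case9: "is_minor K34_V K34_E H_V (H_E {(E1 2), E2, E4})"
  apply (rule K34I[where \<phi> = "\<lambda>u. case u of Inl i \<Rightarrow> (if i = 0 then {Some (E1 1), Some (E1 2)} else if i = 1 then {Some E2} else {Some E4}) | Inr j \<Rightarrow> (if j = 0 then {Some (E3 1)} else if j = 1 then {Some (E3 2)} else if j = 2 then {Some (E1 3), Some (E3 3)} else {None})"])
  apply (simp_all only: K34_V_alt all3 all4)
  apply (simp_all add: H_V_alt)
  apply (intro conjI ic1 ic2 ic3; simp add: H_E_alt doubleton_eq_iff)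
  apply (simp add: H_E_alt doubleton_eq_iff)
  done

lemma perm9_54: "(is_minor K34_V K34_E H_V (H_E {(E1 2), E2, E4}) \<or> is_minor F4_V F4_E H_V (H_E {(E1 2), E2, E4}))"
  using case9 by (simp add: insert_commute)

lemma perm9_55: "(is_minor K34_V K34_E H_V (H_E {(E1 2), E4, E2}) \<or> is_minor F4_V F4_E H_V (H_E {(E1 2), E4, E2}))"
  using case9 by (simp add: insert_commute)

lemma perm9_56: "(is_minor K34_V K34_E H_V (H_E {E2, (E1 2), E4}) \<or> is_minor F4_V F4_E H_V (H_E {E2, (E1 2), E4}))"
  using case9 by (simp add: insert_commute)

lemma perm9_57: "(is_minor K34_V K34_E H_V (H_E {E2, E4, (E1 2)}) \<or> is_minor F4_V F4_E H_V (H_E {E2, E4, (E1 2)}))"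
  using case9 by (simp add: insert_commute)

lemma perm9_58: "(is_minor K34_V K34_E H_V (H_E {E4, (E1 2), E2}) \<or> is_minor F4_V F4_E H_V (H_E {E4, (E1 2), E2}))"
  using case9 by (simp add: insert_commute)

lemma perm9_59: "(is_minor K34_V K34_E H_V (H_E {E4, E2, (E1 2)}) \<or> is_minor F4_V F4_E H_V (H_E {E4, E2, (E1 2)}))"
  using case9 by (simp add: insert_commute)

lemma case10: "is_minor K34_V K34_E H_V (H_E {(E1 2), (E3 1), (E3 3)})"
  apply (rule K34I[where \<phi> = "\<lambda>u. case u of Inl i \<Rightarrow> (if i = 0 then {Some (E3 1)} else if i = 1 then {Some (E1 2), Some (E3 2)} else {Some (E1 3), Some (E3 3)}) | Inr j \<Rightarrow> (if j = 0 then {Some (E1 1)} else if j = 1 then {Some E2} else if j = 2 then {Some E4} else {None})"])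
  apply (simp_all only: K34_V_alt all3 all4)
  apply (simp_all add: H_V_alt)
  apply (intro conjI ic1 ic2 ic3; simp add: H_E_alt doubleton_eq_iff)
  apply (simp add: H_E_alt doubleton_eq_iff)
  done

lemma perm10_60: "(is_minor K34_V K34_E H_V (H_E {(E1 2), (E3 1), (E3 3)}) \<or> is_minor F4_V F4_E H_V (H_E {(E1 2), (E3 1), (E3 3)}))"
  using case10 by (simp add: insert_commute)

lemma perm10_61: "(is_minor K34_V K34_E H_V (H_E {(E1 2), (E3 3), (E3 1)}) \<or> is_minor F4_V F4_E H_V (H_E {(E1 2), (E3 3), (E3 1)}))"
  using case10 by (simp add: insert_commute)

lemma perm10_62: "(is_minor K34_V K34_E H_V (H_E {(E3 1), (E1 2), (E3 3)}) \<or> is_minor F4_V F4_E H_V (H_E {(E3 1), (E1 2), (E3 3)}))"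
  using case10 by (simp add: insert_commute)

lemma perm10_63: "(is_minor K34_V K34_E H_V (H_E {(E3 1), (E3 3), (E1 2)}) \<or> is_minor F4_V F4_E H_V (H_E {(E3 1), (E3 3), (E1 2)}))"
  using case10 by (simp add: insert_commute)

lemma perm10_64: "(is_minor K34_V K34_E H_V (H_E {(E3 3), (E1 2), (E3 1)}) \<or> is_minor F4_V F4_E H_V (H_E {(E3 3), (E1 2), (E3 1)}))"
  using case10 by (simp add: insert_commute)

lemma perm10_65: "(is_minor K34_V K34_E H_V (H_E {(E3 3), (E3 1), (E1 2)}) \<or> is_minor F4_V F4_E H_V (H_E {(E3 3), (E3 1), (E1 2)}))"
  using case10 by (simp add: insert_commute)

lemma case11: "is_minor K34_V K34_E H_V (H_E {(E1 3), E2, E4})"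
  apply (rule K34I[where \<phi> = "\<lambda>u. case u of Inl i \<Rightarrow> (if i = 0 then {Some (E1 1), Some (E1 2), Some (E1 3)} else if i = 1 then {Some E2} else {Some E4}) | Inr j \<Rightarrow> (if j = 0 then {Some (E3 1)} else if j = 1 then {Some (E3 2)} else if j = 2 then {Some (E3 3)} else {None})"])
  apply (simp_all only: K34_V_alt all3 all4)
  apply (simp_all add: H_V_alt)
  apply (intro conjI ic1 ic2 ic3; simp add: H_E_alt doubleton_eq_iff)
  apply (simp add: H_E_alt doubleton_eq_iff)
  done

lemma perm11_66: "(is_minor K34_V K34_E H_V (H_E {(E1 3), E2, E4}) \<or> is_minor F4_V F4_E H_V (H_E {(E1 3), E2, E4}))"
  using case11 by (simp add: insert_commute)

lemma perm11_67: "(is_minor K34_V K34_E H_V (H_E {(E1 3), E4, E2}) \<or> is_minor F4_V F4_E H_V (H_E {(E1 3), E4, E2}))"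
  using case11 by (simp add: insert_commute)

lemma perm11_68: "(is_minor K34_V K34_E H_V (H_E {E2, (E1 3), E4}) \<or> is_minor F4_V F4_E H_V (H_E {E2, (E1 3), E4}))"
  using case11 by (simp add: insert_commute)

lemma perm11_69: "(is_minor K34_V K34_E H_V (H_E {E2, E4, (E1 3)}) \<or> is_minor F4_V F4_E H_V (H_E {E2, E4, (E1 3)}))"
  using case11 by (simp add: insert_commute)

lemma perm11_70: "(is_minor K34_V K34_E H_V (H_E {E4, (E1 3), E2}) \<or> is_minor F4_V F4_E H_V (H_E {E4, (E1 3), E2}))"
  using case11 by (simp add: insert_commute)

lemma perm11_71: "(is_minor K34_V K34_E H_V (H_E {E4, E2, (E1 3)}) \<or> is_minor F4_V F4_E H_V (H_E {E4, E2, (E1 3)}))"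
  using case11 by (simp add: insert_commute)

lemma case12: "is_minor K34_V K34_E H_V (H_E {(E1 3), (E3 1), (E3 2)})"
  apply (rule K34I[where \<phi> = "\<lambda>u. case u of Inl i \<Rightarrow> (if i = 0 then {Some (E3 1)} else if i = 1 then {Some (E1 2), Some (E3 2)} else {Some (E1 3), Some (E3 3)}) | Inr j \<Rightarrow> (if j = 0 then {Some (E1 1)} else if j = 1 then {Some E2} else if j = 2 then {Some E4} else {None})"])
  apply (simp_all only: K34_V_alt all3 all4)
  apply (simp_all add: H_V_alt)
  apply (intro conjI ic1 ic2 ic3; simp add: H_E_alt doubleton_eq_iff)
  apply (simp add: H_E_alt doubleton_eq_iff)
  done

lemma perm12_72: "(is_minor K34_V K34_E H_V (H_E {(E1 3), (E3 1), (E3 2)}) \<or> is_minor F4_V F4_E H_V (H_E {(E1 3), (E3 1), (E3 2)}))"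
  using case12 by (simp add: insert_commute)

lemma perm12_73: "(is_minor K34_V K34_E H_V (H_E {(E1 3), (E3 2), (E3 1)}) \<or> is_minor F4_V F4_E H_V (H_E {(E1 3), (E3 2), (E3 1)}))"
  using case12 by (simp add: insert_commute)

lemma perm12_74: "(is_minor K34_V K34_E H_V (H_E {(E3 1), (E1 3), (E3 2)}) \<or> is_minor F4_V F4_E H_V (H_E {(E3 1), (E1 3), (E3 2)}))"
  using case12 by (simp add: insert_commute)

lemma perm12_75: "(is_minor K34_V K34_E H_V (H_E {(E3 1), (E3 2), (E1 3)}) \<or> is_minor F4_V F4_E H_V (H_E {(E3 1), (E3 2), (E1 3)}))"
  using case12 by (simp add: insert_commute)

lemma perm12_76: "(is_minor K34_V K34_E H_V (H_E {(E3 2), (E1 3), (E3 1)}) \<or> is_minor F4_V F4_E H_V (H_E {(E3 2), (E1 3), (E3 1)}))"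
  using case12 by (simp add: insert_commute)

lemma perm12_77: "(is_minor K34_V K34_E H_V (H_E {(E3 2), (E3 1), (E1 3)}) \<or> is_minor F4_V F4_E H_V (H_E {(E3 2), (E3 1), (E1 3)}))"
  using case12 by (simp add: insert_commute)

lemma case13: "is_minor K34_V K34_E H_V (H_E {(E3 1), (E3 2), (E3 3)})"
  apply (rule K34I[where \<phi> = "\<lambda>u. case u of Inl i \<Rightarrow> (if i = 0 then {Some (E3 1)} else if i = 1 then {Some (E1 2), Some (E3 2)} else {Some (E1 3), Some (E3 3)}) | Inr j \<Rightarrow> (if j = 0 then {Some (E1 1)} else if j = 1 then {Some E2} else if j = 2 then {Some E4} else {None})"])
  apply (simp_all only: K34_V_alt all3 all4)
  apply (simp_all add: H_V_alt)
  apply (intro conjI ic1 ic2 ic3; simp add: H_E_alt doubleton_eq_iff)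
  apply (simp add: H_E_alt doubleton_eq_iff)
  done

lemma perm13_78: "(is_minor K34_V K34_E H_V (H_E {(E3 1), (E3 2), (E3 3)}) \<or> is_minor F4_V F4_E H_V (H_E {(E3 1), (E3 2), (E3 3)}))"
  using case13 by (simp add: insert_commute)

lemma perm13_79: "(is_minor K34_V K34_E H_V (H_E {(E3 1), (E3 3), (E3 2)}) \<or> is_minor F4_V F4_E H_V (H_E {(E3 1), (E3 3), (E3 2)}))"
  using case13 by (simp add: insert_commute)

lemma perm13_80: "(is_minor K34_V K34_E H_V (H_E {(E3 2), (E3 1), (E3 3)}) \<or> is_minor F4_V F4_E H_V (H_E {(E3 2), (E3 1), (E3 3)}))"
  using case13 by (simp add: insert_commute)

lemma perm13_81: "(is_minor K34_V K34_E H_V (H_E {(E3 2), (E3 3), (E3 1)}) \<or> is_minor F4_V F4_E H_V (H_E {(E3 2), (E3 3), (E3 1)}))"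
  using case13 by (simp add: insert_commute)

lemma perm13_82: "(is_minor K34_V K34_E H_V (H_E {(E3 3), (E3 1), (E3 2)}) \<or> is_minor F4_V F4_E H_V (H_E {(E3 3), (E3 1), (E3 2)}))"
  using case13 by (simp add: insert_commute)

lemma perm13_83: "(is_minor K34_V K34_E H_V (H_E {(E3 3), (E3 2), (E3 1)}) \<or> is_minor F4_V F4_E H_V (H_E {(E3 3), (E3 2), (E3 1)}))"
  using case13 by (simp add: insert_commute)

lemma E20_E_iff: "({x,y} \<in> E20_E) = ((x,y) \<in> set [(E0, E2), (E2, E0), (E0, (E1 1)), ((E1 1), E0), (E0, (E1 2)), ((E1 2), E0), (E0, (E1 3)), ((E1 3), E0), ((E1 1), (E1 2)), ((E1 2), (E1 1)), ((E1 2), (E1 3)), ((E1 3), (E1 2)), ((E1 3), (E1 1)), ((E1 1), (E1 3)), ((E1 1), (E3 1)), ((E3 1), (E1 1)), (E2, (E3 1)), ((E3 1), E2), (E4, (E3 1)), ((E3 1), E4), ((E1 2), (E3 2)), ((E3 2), (E1 2)), (E2, (E3 2)), ((E3 2), E2), (E4, (E3 2)), ((E3 2), E4), ((E1 3), (E3 3)), ((E3 3), (E1 3)), (E2, (E3 3)), ((E3 3), E2), (E4, (E3 3)), ((E3 3), E4)])"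
  by (auto simp: E20_E_alt doubleton_eq_iff)

lemma cls: assumes "a \<in> E20_V" "b \<in> E20_V" "c \<in> E20_V" "a \<noteq> b" "b \<noteq> c" "a \<noteq> c"
  "({a,b} \<in> E20_E \<and> {a,c} \<in> E20_E \<and> {b,c} \<in> E20_E) \<or> ({a,b} \<notin> E20_E \<and> {a,c} \<notin> E20_E \<and> {b,c} \<notin> E20_E)"
  shows "(a,b,c) \<in> set [(E0, (E1 1), (E1 2)), (E0, (E1 2), (E1 1)), ((E1 1), E0, (E1 2)), ((E1 1), (E1 2), E0), ((E1 2), E0, (E1 1)), ((E1 2), (E1 1), E0), (E0, (E1 1), (E1 3)), (E0, (E1 3), (E1 1)), ((E1 1), E0, (E1 3)), ((E1 1), (E1 3), E0), ((E1 3), E0, (E1 1)), ((E1 3), (E1 1), E0), (E0, (E1 2), (E1 3)), (E0, (E1 3), (E1 2)), ((E1 2), E0, (E1 3)), ((E1 2), (E1 3), E0), ((E1 3), E0, (E1 2)), ((E1 3), (E1 2), E0), (E0, (E3 1), (E3 2)), (E0, (E3 2), (E3 1)), ((E3 1), E0, (E3 2)), ((E3 1), (E3 2), E0), ((E3 2), E0, (E3 1)), ((E3 2), (E3 1), E0), (E0, (E3 1), (E3 3)), (E0, (E3 3), (E3 1)), ((E3 1), E0, (E3 3)), ((E3 1), (E3 3), E0), ((E3 3), E0, (E3 1)), ((E3 3), (E3 1), E0), (E0, (E3 2), (E3 3)), (E0, (E3 3), (E3 2)), ((E3 2), E0, (E3 3)), ((E3 2), (E3 3), E0), ((E3 3),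 E0, (E3 2)), ((E3 3), (E3 2), E0), ((E1 1), (E1 2), (E1 3)), ((E1 1), (E1 3), (E1 2)), ((E1 2), (E1 1), (E1 3)), ((E1 2), (E1 3), (E1 1)), ((E1 3), (E1 1), (E1 2)), ((E1 3), (E1 2), (E1 1)), ((E1 1), E2, E4), ((E1 1), E4, E2), (E2, (E1 1), E4), (E2, E4, (E1 1)), (E4, (E1 1), E2), (E4, E2, (E1 1)), ((E1 1), (E3 2), (E3 3)), ((E1 1), (E3 3), (E3 2)), ((E3 2), (E1 1), (E3 3)), ((E3 2), (E3 3), (E1 1)), ((E3 3), (E1 1), (E3 2)), ((E3 3), (E3 2), (E1 1)), ((E1 2), E2, E4), ((E1 2), E4, E2), (E2, (E1 2), E4), (E2, E4, (E1 2)), (E4, (E1 2), E2), (E4, E2, (E1 2)), ((E1 2), (E3 1), (E3 3)), ((E1 2), (E3 3), (E3 1)), ((E3 1), (E1 2), (E3 3)), ((E3 1), (E3 3), (E1 2)), ((E3 3), (E1 2), (E3 1)), ((E3 3), (E3 1), (E1 2)), ((E1 3), E2, E4), ((E1 3), E4, E2), (E2, (E1 3), E4), (E2, E4, (E1 3)), (E4, (E1 3), E2), (E4, E2, (E1 3)), ((E1 3), (E3 1), (E3 2)), ((E1 3), (E3 2), (E3 1)), ((E3 1), (E1 3), (E3 2)), ((E3 1), (E3 2), (E1 3)), ((E3 2), (E1 3), (E3 1)), ((E3 2), (E3 1), (E1 3)), ((E3 1), (E3 2), (E3 3)), ((E3 1), (E3 3), (E3 2)), ((E3 2), (E3 1),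 (E3 3)), ((E3 2), (E3 3), (E3 1)), ((E3 3), (E3 1), (E3 2)), ((E3 3), (E3 2), (E3 1))]"
  using assms unfolding E20_E_iff E20_V_alt insert_iff empty_iff
  by (elim disjE) simp_all
theorem lemma4p5:
  fixes S :: "e20v set"
  assumes "S \<subseteq> E20_V" and "card S = 3"
    and "(\<forall>x\<in>S. \<forall>y\<in>S. x \<noteq> y \<longrightarrow> {x, y} \<in> E20_E) \<or>
         (\<forall>x\<in>S. \<forall>y\<in>S. x \<noteq> y \<longrightarrow> {x, y} \<notin> E20_E)"
  shows "is_minor K34_V K34_E H_V (H_E S) \<or> is_minor F4_V F4_E H_V (H_E S)"
proof -
  from assms(2)[unfolded card_3_iff] obtain a b c where abc: "S = {a,b,c}" "a \<noteq> b" "b \<noteq> c" "a \<noteq> c"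
    by (elim exE conjE)
  have m: "a \<in> S" "b \<in> S" "c \<in> S" unfolding abc(1) by simp_all
  have ins: "a \<in> E20_V" "b \<in> E20_V" "c \<in> E20_V" using assms(1) m by (simp_all add: subset_iff)
  have cnd: "({a,b} \<in> E20_E \<and> {a,c} \<in> E20_E \<and> {b,c} \<in> E20_E) \<or> ({a,b} \<notin> E20_E \<and> {a,c} \<notin> E20_E \<and> {b,c} \<notin> E20_E)"
  proof -
    from assms(3) show ?thesis
    proof (elim disjE)
      assume H: "\<forall>x\<in>S. \<forall>y\<in>S. x \<noteq> y \<longrightarrow> {x, y} \<in> E20_E"
      have f1: "{a,b} \<in> E20_E" by (rule H[rule_format, OF m(1) m(2) abc(2)])
      have f2: "{a,c} \<in> E20_E" by (rule H[rule_format, OF m(1) m(3) abc(4)])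
      have f3: "{b,c} \<in> E20_E" by (rule H[rule_format, OF m(2) m(3) abc(3)])
      show ?thesis using f1 f2 f3 by (intro disjI1 conjI)
    next
      assume H: "\<forall>x\<in>S. \<forall>y\<in>S. x \<noteq> y \<longrightarrow> {x, y} \<notin> E20_E"
      have f1: "{a,b} \<notin> E20_E" by (rule H[rule_format, OF m(1) m(2) abc(2)])
      have f2: "{a,c} \<notin> E20_E" by (rule H[rule_format, OF m(1) m(3) abc(4)])
      have f3: "{b,c} \<notin> E20_E" by (rule H[rule_format, OF m(2) m(3) abc(3)])
      show ?thesis using f1 f2 f3 by (intro disjI2 conjI)
    qed
  qed
  have "(a,b,c) \<in> set [(E0, (E1 1), (E1 2)), (E0, (E1 2), (E1 1)), ((E1 1), E0, (E1 2)), ((E1 1), (E1 2), E0), ((E1 2), E0, (E1 1)), ((E1 2), (E1 1), E0), (E0, (E1 1), (E1 3)), (E0, (E1 3), (E1 1)), ((E1 1), E0, (E1 3)), ((E1 1), (E1 3), E0), ((E1 3), E0, (E1 1)), ((E1 3), (E1 1), E0), (E0, (E1 2), (E1 3)), (E0, (E1 3), (E1 2)), ((E1 2), E0, (E1 3)), ((E1 2), (E1 3), E0), ((E1 3), E0, (E1 2)), ((E1 3), (E1 2), E0), (E0, (E3 1), (E3 2)), (E0, (E3 2), (E3 1)), ((E3 1), E0, (E3 2)), ((E3 1), (E3 2), E0), ((E3 2), E0, (E3 1)), ((E3 2), (E3 1), E0), (E0, (E3 1), (E3 3)), (E0, (E3 3), (E3 1)), ((E3 1), E0, (E3 3)), ((E3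 1), (E3 3), E0), ((E3 3), E0, (E3 1)), ((E3 3), (E3 1), E0), (E0, (E3 2), (E3 3)), (E0, (E3 3), (E3 2)), ((E3 2), E0, (E3 3)), ((E3 2), (E3 3), E0), ((E3 3), E0, (E3 2)), ((E3 3), (E3 2), E0), ((E1 1), (E1 2), (E1 3)), ((E1 1), (E1 3), (E1 2)), ((E1 2), (E1 1), (E1 3)), ((E1 2), (E1 3), (E1 1)), ((E1 3), (E1 1), (E1 2)), ((E1 3), (E1 2), (E1 1)), ((E1 1), E2, E4), ((E1 1), E4, E2), (E2, (E1 1), E4), (E2, E4, (E1 1)), (E4, (E1 1), E2), (E4, E2, (E1 1)), ((E1 1), (E3 2), (E3 3)), ((E1 1), (E3 3), (E3 2)), ((E3 2), (E1 1), (E3 3)), ((E3 2), (E3 3), (E1 1)), ((E3 3), (E1 1), (E3 2)), ((E3 3), (E3 2), (E1 1)), ((E1 2), E2, E4), ((E1 2), E4, E2), (E2, (E1 2), E4), (E2, E4, (E1 2)), (E4, (E1 2), E2), (E4, E2, (E1 2)), ((E1 2), (E3 1), (E3 3)), ((E1 2), (E3 3), (E3 1)), ((E3 1), (E1 2), (E3 3)), ((E3 1), (E3 3), (E1 2)), ((E3 3), (E1 2), (E3 1)), ((E3 3), (E3 1), (E1 2)), ((E1 3), E2, E4), ((E1 3), E4, E2), (E2, (E1 3), E4), (E2, E4, (E1 3)), (E4, (E1 3), E2), (E4, E2, (E1 3)), ((E1 3), (E3 1), (E3 2)), ((E1 3), (E3 2), (E3 1)), ((E3 1), (E1 3), (E3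 2)), ((E3 1), (E3 2), (E1 3)), ((E3 2), (E1 3), (E3 1)), ((E3 2), (E3 1), (E1 3)), ((E3 1), (E3 2), (E3 3)), ((E3 1), (E3 3), (E3 2)), ((E3 2), (E3 1), (E3 3)), ((E3 2), (E3 3), (E3 1)), ((E3 3), (E3 1), (E3 2)), ((E3 3), (E3 2), (E3 1))]" using cls[OF ins abc(2-4) cnd] .
  then show ?thesis unfolding abc(1)
    unfolding set_simps insert_iff empty_iff prod.inject
    by (elim disjE conjE) (simp_all only: perm0_0 perm0_1 perm0_2 perm0_3 perm0_4 perm0_5 perm1_6 perm1_7 perm1_8 perm1_9 perm1_10 perm1_11 perm2_12 perm2_13 perm2_14 perm2_15 perm2_16 perm2_17 perm3_18 perm3_19 perm3_20 perm3_21 perm3_22 perm3_23 perm4_24 perm4_25 perm4_26 perm4_27 perm4_28 perm4_29 perm5_30 perm5_31 perm5_32 perm5_33 perm5_34 perm5_35 perm6_36 perm6_37 perm6_38 perm6_39 perm6_40 perm6_41 perm7_42 perm7_43 perm7_44 perm7_45 perm7_46 perm7_47 perm8_48 perm8_49 perm8_50 perm8_51 perm8_52 perm8_53 perm9_54 perm9_55 perm9_56 perm9_57 perm9_58 perm9_59 perm10_60 perm10_61 perm10_62 perm10_63 perm10_64 perm10_65 perm11_66 perm11_67 perm11_68 perm11_69 perm11_70 perm11_71 perm12_72 perm12_73 perm12_74 perm12_75 perm12_76 perm12_77 perm13_78 perm13_79 perm13_80 perm13_81 perm13_82 perm13_83)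
qed

end
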